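(* Given any $\lambda\in(0,1)$, $\epsilon_p\in(0,1)$, $H>0$ and any constants $c_1,c_2\ge4$, there exists a set of MDPs $\mathcal M=\{m_1,m_2\}$ with horizon $H$ that is $\lambda$-separable but is not well-separated.
   Context: MDPs are tabular with common state and action spaces; $P_i(s,a)=P_i(\cdot\mid s,a)$. $\mathcal M$ is $\lambda$-separable if for every $i\ne j$ there exists $(s,a)$ with $\|P_i(s,a)-P_j(s,a)\|_1\ge\lambda$. Well-separated (entropy-based separation): let $\Pi$ be the class of all history-dependent, possibly non-Markovian policies, and for $\pi\in\Pi$ let $\tau\sim(m,\pi)$ be a length-$H$ trajectory sampled from MDP $m$ under $\pi$, with $\Pr_{m,\pi}(\tau)$ its probability. $\mathcal M$ (with $M=|\mathcal M|$) is well-separated (with parameters $\epsilon_p,c_1,c_2$) if for all $m,m'\in\mathcal M$ with $m'\ne m$ and all $\pi\in\Pi$, \[ \Pr_{\tau\sim(m,\pi)}\Big(\frac{\Pr_{m',\pi}(\tau)}{\Pr_{m,\pi}(\tau)}>(\epsilon_p/M)^{c_1}\Big)<(\epsilon_p/M)^{c_2}. \] *)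

theory Defs
  imports "HOL-Probability.Probability"
begin

text \<open>An MDP is given by its
transition kernel; all MDPs in a family share the initial-state distribution.\<close>

type_synonym mdp = "nat \<Rightarrow> nat \<Rightarrow> nat pmf"

text \<open>History-dependent (non-Markovian), possibly randomized policy:
given the past state-action pairs and the current state, a distribution over actions.\<close>
type_synonym policy = "(nat \<times> nat) list \<Rightarrow> nat \<Rightarrow> nat pmf"

definition valid_mdp :: "nat set \<Rightarrow> nat set \<Rightarrow> mdp \<Rightarrow> bool" where
  "valid_mdp S A P \<longleftrightarrow> (\<forall>s\<in>S. \<forall>a\<in>A. set_pmf (P s a) \<subseteq> S)"

definition valid_policy :: "nat set \<Rightarrow> policy \<Rightarrow> bool" where
  "valid_policy A \<pi> \<longleftrightarrow> (\<forall>h s. set_pmf (\<pi> h s) \<subseteq> A)"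

definition trajs :: "nat set \<Rightarrow> nat set \<Rightarrow> nat \<Rightarrow> (nat \<times> nat) list set" where
  "trajs S A H = {\<tau>. length \<tau> = H \<and> set \<tau> \<subseteq> S \<times> A}"

fun tp_aux :: "mdp \<Rightarrow> policy \<Rightarrow> (nat \<times> nat) list \<Rightarrow> (nat \<times> nat) list \<Rightarrow> real" where
  "tp_aux P \<pi> h [] = 1"
| "tp_aux P \<pi> h ((s,a) # rest) =
     pmf (\<pi> h s) a
     * (case rest of [] \<Rightarrow> 1 | (s',_) # _ \<Rightarrow> pmf (P s a) s')
     * tp_aux P \<pi> (h @ [(s,a)]) rest"

fun traj_prob :: "nat pmf \<Rightarrow> mdp \<Rightarrow> policy \<Rightarrow> (nat \<times> nat) list \<Rightarrow> real" where
  "traj_prob \<nu> P \<pi> [] = 1"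
| "traj_prob \<nu> P \<pi> ((s,a) # rest) = pmf \<nu> s * tp_aux P \<pi> [] ((s,a) # rest)"

definition l1_dist :: "nat set \<Rightarrow> nat pmf \<Rightarrow> nat pmf \<Rightarrow> real" where
  "l1_dist S p q = (\<Sum>s\<in>S. \<bar>pmf p s - pmf q s\<bar>)"

definition lambda_separable :: "nat set \<Rightarrow> nat set \<Rightarrow> mdp set \<Rightarrow> real \<Rightarrow> bool" where
  "lambda_separable S A Ms lam \<longleftrightarrow>
     (\<forall>Pi\<in>Ms. \<forall>Pj\<in>Ms. Pi \<noteq> Pj \<longrightarrow> (\<exists>s\<in>S. \<exists>a\<in>A. l1_dist S (Pi s a) (Pj s a) \<ge> lam))"

definition ratio_event_prob ::
  "nat set \<Rightarrow> nat set \<Rightarrow> nat \<Rightarrow> nat pmf \<Rightarrow> mdp \<Rightarrow> mdp \<Rightarrow> policy \<Rightarrow> real \<Rightarrow> real" where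
  "ratio_event_prob S A H \<nu> m m' \<pi> thr =
     (\<Sum>\<tau>\<in>{\<tau>\<in>trajs S A H. traj_prob \<nu> m \<pi> \<tau> > 0 \<and>
                 traj_prob \<nu> m' \<pi> \<tau> / traj_prob \<nu> m \<pi> \<tau> > thr}.
        traj_prob \<nu> m \<pi> \<tau>)"

definition well_separated ::
  "nat set \<Rightarrow> nat set \<Rightarrow> nat \<Rightarrow> nat pmf \<Rightarrow> mdp set \<Rightarrow> real \<Rightarrow> real \<Rightarrow> real \<Rightarrow> bool" where
  "well_separated S A H \<nu> Ms \<epsilon>p c1 c2 \<longleftrightarrow>
     (\<forall>m\<in>Ms. \<forall>m'\<in>Ms. m' \<noteq> m \<longrightarrow> (\<forall>\<pi>. valid_policy A \<pi> \<longrightarrow>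
        ratio_event_prob S A H \<nu> m m' \<pi> ((\<epsilon>p / real (card Ms)) powr c1)
          < (\<epsilon>p / real (card Ms)) powr c2))"

end

theory Submission
  imports Defs
begin

lemma tp_rep:
  assumes "\<And>s. P s 0 = return_pmf 0"
  shows "tp_aux P (\<lambda>h s. return_pmf 0) h (replicate n (0,0)) = 1"
proof (induction n arbitrary: h)
  case 0
  then show ?case by simp
next
  case (Suc n)
  have "(case replicate n (0::nat,0::nat) of [] \<Rightarrow> 1 | (s',_) # _ \<Rightarrow> pmf (P 0 0) s') = (1::real)"
    using assms by (cases n) auto
  then show ?case using Suc assms by simp
qed

theorem lemma6:
  fixes lam \<epsilon>p c1 c2 :: real and H :: nat
  assumes "0 < lam" "lam < 1" "0 < \<epsilon>p" "\<epsilon>p < 1" "H > 0" "c1 \<ge> 4" "c2 \<ge> 4"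
  shows "\<exists>(S::nat set) (A::nat set) (\<nu>::nat pmf) (m1::mdp) (m2::mdp).
           finite S \<and> S \<noteq> {} \<and> finite A \<and> A \<noteq> {} \<and> set_pmf \<nu> \<subseteq> S \<and>
           valid_mdp S A m1 \<and> valid_mdp S A m2 \<and> m1 \<noteq> m2 \<and>
           lambda_separable S A {m1, m2} lam \<and>
           \<not> well_separated S A H \<nu> {m1, m2} \<epsilon>p c1 c2"
proof -
  define S :: "nat set" where "S = {0,1}"
  define A :: "nat set" where "A = {0,1}"
  define m1 :: mdp where "m1 = (\<lambda>s a. return_pmf 0)"
  define m2 :: mdp where "m2 = (\<lambda>s a. if a = 1 then return_pmf 1 else return_pmf 0)"
  define \<pi> :: policy where "\<pi> = (\<lambda>h s. return_pmf 0)"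
  define \<nu> :: "nat pmf" where "\<nu> = return_pmf 0"
  have ne: "m1 \<noteq> m2"
  proof
    assume "m1 = m2"
    then have "m1 0 1 = m2 0 1" by simp
    then show False unfolding m1_def m2_def by simp
  qed
  have v1: "valid_mdp S A m1" unfolding valid_mdp_def S_def m1_def by auto
  have v2: "valid_mdp S A m2" unfolding valid_mdp_def S_def m2_def by auto
  have l1: "l1_dist S (m1 0 1) (m2 0 1) = 2"
    unfolding l1_dist_def S_def m1_def m2_def by simp
  have sep: "lambda_separable S A {m1, m2} lam"
    unfolding lambda_separable_def
  proof (intro ballI impI)
    fix Pi Pj assume "Pi \<in> {m1,m2}" "Pj \<in> {m1,m2}" "Pi \<noteq> Pj"
    moreover have "l1_dist S (m2 0 1) (m1 0 1) = 2"
      unfolding l1_dist_def S_def m1_def m2_def by simp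
    ultimately show "\<exists>s\<in>S. \<exists>a\<in>A. lam \<le> l1_dist S (Pi s a) (Pj s a)"
      using l1 assms(2) unfolding S_def A_def by (intro bexI[of _ 0] bexI[of _ 1]) auto
  qed
  define \<tau> where "\<tau> = replicate H (0::nat,0::nat)"
  obtain n where Hn: "H = Suc n" using assms(5) by (cases H) auto
  have t1: "traj_prob \<nu> m1 \<pi> \<tau> = 1"
    unfolding \<tau>_def Hn \<nu>_def \<pi>_def
    using tp_rep[of m1 "[]" "Suc n"] by (simp add: m1_def)
  have t2: "traj_prob \<nu> m2 \<pi> \<tau> = 1"
    unfolding \<tau>_def Hn \<nu>_def \<pi>_def
    using tp_rep[of m2 "[]" "Suc n"] by (simp add: m2_def)
  have card: "card {m1, m2} = 2" using ne by simp
  have b0: "0 < \<epsilon>p / 2" "\<epsilon>p / 2 < 1" using assms by auto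
  have p1: "(\<epsilon>p / 2) powr c1 < 1"
  proof -
    have "(\<epsilon>p / 2) powr c1 \<le> \<epsilon>p / 2"
      using b0 assms(6) by (intro powr_le_one_le) auto
    then show ?thesis using b0(2) by (rule le_less_trans)
  qed
  have p2: "(\<epsilon>p / 2) powr c2 \<le> 1"
    using b0 assms(7) by (intro powr_le1) auto
  define T where "T = {\<tau>\<in>trajs S A H. traj_prob \<nu> m1 \<pi> \<tau> > 0 \<and>
                 traj_prob \<nu> m2 \<pi> \<tau> / traj_prob \<nu> m1 \<pi> \<tau> > (\<epsilon>p / 2) powr c1}"
  have fin: "finite (trajs S A H)"
  proof -
    have "trajs S A H = {xs. set xs \<subseteq> S \<times> A \<and> length xs = H}"
      unfolding trajs_def by auto
    then show ?thesis using finite_lists_length_eq[of "S \<times> A" H]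
      unfolding S_def A_def by simp
  qed
  have tin: "\<tau> \<in> T" unfolding T_def trajs_def \<tau>_def
    using t1 t2 p1 by (auto simp: S_def A_def \<tau>_def)
  have "1 \<le> (\<Sum>\<tau>\<in>T. traj_prob \<nu> m1 \<pi> \<tau>)"
    using member_le_sum[of \<tau> T "traj_prob \<nu> m1 \<pi>"] tin t1 fin
    by (auto simp: T_def less_imp_le)
  then have R: "ratio_event_prob S A H \<nu> m1 m2 \<pi> ((\<epsilon>p / real (card {m1,m2})) powr c1)
          \<ge> (\<epsilon>p / real (card {m1,m2})) powr c2"
    unfolding ratio_event_prob_def card using p2 T_def by simp
  have VP: "valid_policy A \<pi>" unfolding valid_policy_def \<pi>_def A_def by simp
  have "\<not> well_separated S A H \<nu> {m1, m2} \<epsilon>p c1 c2"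
    unfolding well_separated_def
  proof
    assume W: "\<forall>m\<in>{m1, m2}. \<forall>m'\<in>{m1, m2}. m' \<noteq> m \<longrightarrow> (\<forall>\<pi>. valid_policy A \<pi> \<longrightarrow>
        ratio_event_prob S A H \<nu> m m' \<pi> ((\<epsilon>p / real (card {m1, m2})) powr c1)
          < (\<epsilon>p / real (card {m1, m2})) powr c2)"
    have "m1 \<in> {m1,m2}" "m2 \<in> {m1,m2}" by simp_all
    with W ne VP have "ratio_event_prob S A H \<nu> m1 m2 \<pi> ((\<epsilon>p / real (card {m1, m2})) powr c1)
          < (\<epsilon>p / real (card {m1, m2})) powr c2" by metis
    with R show False by linarith
  qed
  moreover have "set_pmf \<nu> \<subseteq> S" unfolding \<nu>_def S_def by simp
  moreover have "finite S" "S \<noteq> {}" "finite A" "A \<noteq> {}" by (simp_all add: S_def A_def)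
  ultimately show ?thesis using v1 v2 ne sep by blast
qed

end
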